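(* Let $\omega\subset\mathbb{R}^2$ be a bounded domain, let $W$ be a Hilbert space of functions $\omega\to\mathbb{R}^3$, continuously embedded in $L^2(\omega)^3$, with scalar product $(\cdot,\cdot)_*$ and norm $\|\cdot\|_*$, let $\mathcal{F}^k\subset W$ ($k\in\mathbb{N}_0$) be closed linear subspaces, let $f\in L^2(\omega)^3$, $\varepsilon>0$, $\tau>0$, $y^0\in W$, and set $I[y]=\frac12\|y\|_*^2-(f,y)$ and $I'[y;w]=(y,w)_*-(f,w)$. Define $y^k=y^{k-1}+\tau d_ty^k$, where $d_ty^k\in\mathcal{F}^{k-1}$ is such that $(d_ty^k,w)_*+I'[y^k;w]+\frac1\varepsilon(y_3^k,w_3)=-\frac1{2\varepsilon}(p_{\mathrm{ccv}}(y_3^{k-1}),w_3)$ for all $w\in\mathcal{F}^{k-1}$. Then this convex-concavely penalized gradient flow is well defined and satisfies, for all $k\ge1$, $I[y^k]+P_\varepsilon[y_3^k]+\tau\|d_ty^k\|_*^2\le I[y^{k-1}]+P_\varepsilon[y_3^{k-1}]$.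
   Context: $(\cdot,\cdot)$ denotes the $L^2(\omega)$ inner product, and $y_3$ the third component of $y$. The penalty functional is $P_\varepsilon[y_3]=\frac1{2\varepsilon}\int_\omega(y_3-1)_+^2dx$ with $(s)_+=\max\{s,0\}$. The function $p_{\mathrm{ccv}}:\mathbb{R}\to\mathbb{R}$ is $p_{\mathrm{ccv}}(s)=-2$ for $s>1$ and $p_{\mathrm{ccv}}(s)=-2s$ for $s\le1$; it is the derivative of the concave function $P_{\mathrm{ccv}}(s)=-2s+1$ ($s>1$), $-s^2$ ($s\le1$), which satisfies $(s-1)_+^2=s^2+P_{\mathrm{ccv}}(s)$. *)

theory Defs
  imports "HOL-Analysis.Analysis"
begin

text \<open>Functions omega -> R^3 are represented as total functions real^2 => real^3;
  only their values on omega enter the L2 quantities.  The third component is y x $ 3.\<close>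

type_synonym vfield = "real^2 \<Rightarrow> real^3"

definition vadd :: "vfield \<Rightarrow> vfield \<Rightarrow> vfield" where
  "vadd u v = (\<lambda>x. u x + v x)"

definition vscale :: "real \<Rightarrow> vfield \<Rightarrow> vfield" where
  "vscale c u = (\<lambda>x. c *\<^sub>R u x)"

definition vdiff :: "vfield \<Rightarrow> vfield \<Rightarrow> vfield" where
  "vdiff u v = (\<lambda>x. u x - v x)"

definition L2ip3 :: "(real^2) set \<Rightarrow> vfield \<Rightarrow> vfield \<Rightarrow> real" where
  "L2ip3 \<omega> u v = (LINT x:\<omega>|lebesgue. u x \<bullet> v x)"

definition L2ip :: "(real^2) set \<Rightarrow> (real^2 \<Rightarrow> real) \<Rightarrow> (real^2 \<Rightarrow> real) \<Rightarrow> real" where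
  "L2ip \<omega> u v = (LINT x:\<omega>|lebesgue. u x * v x)"

definition L2field :: "(real^2) set \<Rightarrow> vfield \<Rightarrow> bool" where
  "L2field \<omega> u \<longleftrightarrow> set_borel_measurable lebesgue \<omega> u \<and>
     set_integrable lebesgue \<omega> (\<lambda>x. (norm (u x))\<^sup>2)"

definition hilbert_on :: "vfield set \<Rightarrow> (vfield \<Rightarrow> vfield \<Rightarrow> real) \<Rightarrow> bool" where
  "hilbert_on W ip \<longleftrightarrow>
     (\<lambda>x. 0) \<in> W \<and>
     (\<forall>u\<in>W. \<forall>v\<in>W. vadd u v \<in> W) \<and>
     (\<forall>c. \<forall>u\<in>W. vscale c u \<in> W) \<and>
     (\<forall>u\<in>W. \<forall>v\<in>W. ip u v = ip v u) \<and>
     (\<forall>u\<in>W. \<forall>v\<in>W. \<forall>w\<in>W. \<forall>a b.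
         ip (vadd (vscale a u) (vscale b v)) w = a * ip u w + b * ip v w) \<and>
     (\<forall>u\<in>W. u \<noteq> (\<lambda>x. 0) \<longrightarrow> ip u u > 0) \<and>
     (\<forall>s. (\<forall>n. s n \<in> W) \<longrightarrow>
         (\<forall>e>0. \<exists>N. \<forall>m\<ge>N. \<forall>n\<ge>N. sqrt (ip (vdiff (s m) (s n)) (vdiff (s m) (s n))) < e) \<longrightarrow>
         (\<exists>w\<in>W. (\<lambda>n. sqrt (ip (vdiff (s n) w) (vdiff (s n) w))) \<longlonglongrightarrow> 0))"

definition cont_embedded_L2 :: "(real^2) set \<Rightarrow> vfield set \<Rightarrow> (vfield \<Rightarrow> vfield \<Rightarrow> real) \<Rightarrow> bool" where
  "cont_embedded_L2 \<omega> W ip \<longleftrightarrow> (\<forall>w\<in>W. L2field \<omega> w) \<and>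
     (\<exists>C. \<forall>w\<in>W. L2ip3 \<omega> w w \<le> C * ip w w)"

definition closed_subspace_of :: "vfield set \<Rightarrow> vfield set \<Rightarrow> (vfield \<Rightarrow> vfield \<Rightarrow> real) \<Rightarrow> bool" where
  "closed_subspace_of F W ip \<longleftrightarrow> F \<subseteq> W \<and>
     (\<lambda>x. 0) \<in> F \<and>
     (\<forall>u\<in>F. \<forall>v\<in>F. vadd u v \<in> F) \<and>
     (\<forall>c. \<forall>u\<in>F. vscale c u \<in> F) \<and>
     (\<forall>s w. (\<forall>n. s n \<in> F) \<longrightarrow> w \<in> W \<longrightarrow>
         (\<lambda>n. sqrt (ip (vdiff (s n) w) (vdiff (s n) w))) \<longlonglongrightarrow> 0 \<longrightarrow> w \<in> F)"

definition normstar :: "(vfield \<Rightarrow> vfield \<Rightarrow> real) \<Rightarrow> vfield \<Rightarrow> real" where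
  "normstar ip w = sqrt (ip w w)"

definition energyI :: "(real^2) set \<Rightarrow> (vfield \<Rightarrow> vfield \<Rightarrow> real) \<Rightarrow> vfield \<Rightarrow> vfield \<Rightarrow> real" where
  "energyI \<omega> ip f y = 1/2 * (normstar ip y)\<^sup>2 - L2ip3 \<omega> f y"

definition energyI' :: "(real^2) set \<Rightarrow> (vfield \<Rightarrow> vfield \<Rightarrow> real) \<Rightarrow> vfield \<Rightarrow> vfield \<Rightarrow> vfield \<Rightarrow> real" where
  "energyI' \<omega> ip f y w = ip y w - L2ip3 \<omega> f w"

definition penalty :: "(real^2) set \<Rightarrow> real \<Rightarrow> (real^2 \<Rightarrow> real) \<Rightarrow> real" where
  "penalty \<omega> \<epsilon> s = 1 / (2 * \<epsilon>) * (LINT x:\<omega>|lebesgue. (max (s x - 1) 0)\<^sup>2)"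

definition p_ccv :: "real \<Rightarrow> real" where
  "p_ccv s = (if s > 1 then -2 else -2 * s)"

definition comp3 :: "vfield \<Rightarrow> real^2 \<Rightarrow> real" where
  "comp3 y = (\<lambda>x. y x $ 3)"

definition dt :: "real \<Rightarrow> (nat \<Rightarrow> vfield) \<Rightarrow> nat \<Rightarrow> vfield" where
  "dt \<tau> y k = vscale (1 / \<tau>) (vdiff (y k) (y (k - 1)))"

definition ccv_flow ::
  "(real^2) set \<Rightarrow> (vfield \<Rightarrow> vfield \<Rightarrow> real) \<Rightarrow> (nat \<Rightarrow> vfield set) \<Rightarrow> vfield \<Rightarrow>
   real \<Rightarrow> real \<Rightarrow> vfield \<Rightarrow> (nat \<Rightarrow> vfield) \<Rightarrow> bool" where
  "ccv_flow \<omega> ip F f \<epsilon> \<tau> y0 y \<longleftrightarrow> y 0 = y0 \<and>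
     (\<forall>k\<ge>1. dt \<tau> y k \<in> F (k - 1) \<and>
        (\<forall>w\<in>F (k - 1).
           ip (dt \<tau> y k) w + energyI' \<omega> ip f (y k) w + 1 / \<epsilon> * L2ip \<omega> (comp3 (y k)) (comp3 w)
           = - 1 / (2 * \<epsilon>) * L2ip \<omega> (\<lambda>x. p_ccv (comp3 (y (k - 1)) x)) (comp3 w)))"

end

theory Submission
  imports Defs
begin


lemma quad_nonneg_disc:
  fixes A B C :: real
  assumes "\<And>t. 0 \<le> A + 2 * B * t + C * t^2"
  shows "B^2 \<le> A * C"
proof (cases "C = 0")
  case True
  have "B = 0"
  proof (rule ccontr)
    assume "B \<noteq> 0"
    have "0 \<le> A + 2 * B * (- (A + 1) / (2 * B))" using assms[of "- (A + 1) / (2 * B)"] True by simp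
    also have "\<dots> = -1" using \<open>B \<noteq> 0\<close> by (simp add: field_simps)
    finally show False by simp
  qed
  then show ?thesis using True by simp
next
  case False
  have A0: "0 \<le> A" using assms[of 0] by simp
  have "0 \<le> C" 
  proof (rule ccontr)
    assume "\<not> 0 \<le> C"
    hence C: "C < 0" by simp
    define t where "t = (\<bar>A\<bar> + 2*\<bar>B\<bar> + 1) / (- C) + 1"
    have t1: "t \<ge> 1" unfolding t_def using C by (simp add: divide_nonneg_neg)
    have "(-C) * t \<ge> \<bar>A\<bar> + 2*\<bar>B\<bar> + 1" unfolding t_def using C by (simp add: field_simps)
    hence "(-C) * t * t \<ge> (\<bar>A\<bar> + 2*\<bar>B\<bar> + 1) * t" using t1 by (intro mult_right_mono) auto
    moreover have "(\<bar>A\<bar> + 2*\<bar>B\<bar> + 1) * t \<ge> \<bar>A\<bar> + 2*\<bar>B\<bar>*t + t"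
    proof -
      have "\<bar>A\<bar> * 1 \<le> \<bar>A\<bar> * t" using t1 by (intro mult_left_mono) auto
      thus ?thesis by (simp add: algebra_simps)
    qed
    moreover have "A + 2*B*t \<le> \<bar>A\<bar> + 2*\<bar>B\<bar>*t" using t1
    proof -
      have "B * t \<le> \<bar>B\<bar> * t" using t1 by (intro mult_right_mono) auto
      thus ?thesis by linarith
    qed
    moreover have "C * t^2 = - ((-C)*t*t)" by (simp add: power2_eq_square)
    ultimately have "A + 2*B*t + C * t^2 < 0" using t1 by linarith
    with assms[of t] show False by simp
  qed
  hence Cp: "C > 0" using False by simp
  have "0 \<le> A + 2 * B * (-B/C) + C * (-B/C)^2" by (rule assms)
  also have "\<dots> = A - B^2 / C" using Cp by (simp add: field_simps power2_eq_square)
  finally have "B^2 / C \<le> A" by simp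
  thus ?thesis using Cp by (simp add: field_simps mult.commute)
qed

lemma CS_from_disc:
  fixes A B C :: real
  assumes "\<And>t. 0 \<le> A + 2 * B * t + C * t^2"
  shows "\<bar>B\<bar> \<le> sqrt A * sqrt C"
proof -
  have "B^2 \<le> A * C" by (rule quad_nonneg_disc[OF assms])
  hence "sqrt (B^2) \<le> sqrt (A * C)" by (rule real_sqrt_le_mono)
  thus ?thesis by (simp add: real_sqrt_mult)
qed



definition L2f :: "'m measure \<Rightarrow> ('m \<Rightarrow> 'b::{real_inner, second_countable_topology}) \<Rightarrow> bool" where
  "L2f M u \<longleftrightarrow> u \<in> borel_measurable M \<and> integrable M (\<lambda>x. (norm (u x))\<^sup>2)"

lemma L2f_inner_integrable:
  fixes u v :: "'m \<Rightarrow> 'b::{real_inner, second_countable_topology}"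
  assumes "L2f M u" "L2f M v"
  shows "integrable M (\<lambda>x. u x \<bullet> v x)"
proof (rule Bochner_Integration.integrable_bound)
  show "integrable M (\<lambda>x. (norm (u x))\<^sup>2 + (norm (v x))\<^sup>2)"
    using assms unfolding L2f_def by auto
  show "(\<lambda>x. u x \<bullet> v x) \<in> borel_measurable M" using assms unfolding L2f_def by (auto intro: borel_measurable_inner)
  show "AE x in M. norm (u x \<bullet> v x) \<le> norm ((norm (u x))\<^sup>2 + (norm (v x))\<^sup>2)"
  proof (intro AE_I2)
    fix x
    have "norm (u x \<bullet> v x) \<le> norm (u x) * norm (v x)" using Cauchy_Schwarz_ineq2 by simp
    also have "\<dots> \<le> (norm (u x))\<^sup>2 + (norm (v x))\<^sup>2"
      by (smt (verit) norm_ge_zero power2_eq_square mult_mono sum_squares_bound)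
    finally show "norm (u x \<bullet> v x) \<le> norm ((norm (u x))\<^sup>2 + (norm (v x))\<^sup>2)" by simp
  qed
qed

lemma L2f_add:
  fixes u v :: "'m \<Rightarrow> 'b::{real_inner, second_countable_topology}"
  assumes "L2f M u" "L2f M v"
  shows "L2f M (\<lambda>x. u x + v x)"
proof -
  have "integrable M (\<lambda>x. u x \<bullet> u x + 2 * (u x \<bullet> v x) + v x \<bullet> v x)"
    using L2f_inner_integrable[OF assms(1) assms(1)] L2f_inner_integrable[OF assms(1) assms(2)]
      L2f_inner_integrable[OF assms(2) assms(2)] by auto
  moreover have "\<And>x. u x \<bullet> u x + 2 * (u x \<bullet> v x) + v x \<bullet> v x = (norm (u x + v x))\<^sup>2"
    by (simp add: power2_norm_eq_inner algebra_simps inner_commute)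
  ultimately show ?thesis using assms unfolding L2f_def by auto
qed

lemma L2f_scale:
  fixes u :: "'m \<Rightarrow> 'b::{real_inner, second_countable_topology}"
  assumes "L2f M u"
  shows "L2f M (\<lambda>x. c *\<^sub>R u x)"
proof -
  have "integrable M (\<lambda>x. c^2 * (norm (u x))\<^sup>2)" using assms unfolding L2f_def by auto
  moreover have "\<And>x. c^2 * (norm (u x))\<^sup>2 = (norm (c *\<^sub>R u x))\<^sup>2"
    by (simp add: power_mult_distrib)
  ultimately show ?thesis using assms unfolding L2f_def by auto
qed

lemma L2f_lin:
  fixes u v :: "'m \<Rightarrow> 'b::{real_inner, second_countable_topology}"
  assumes "L2f M u" "L2f M v"
  shows "L2f M (\<lambda>x. a *\<^sub>R u x + b *\<^sub>R v x)"
  using L2f_add[OF L2f_scale[OF assms(1)] L2f_scale[OF assms(2)]] by simp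

definition IP :: "'m measure \<Rightarrow> ('m \<Rightarrow> 'b::{real_inner, second_countable_topology}) \<Rightarrow> ('m \<Rightarrow> 'b) \<Rightarrow> real" where
  "IP M u v = (\<integral>x. u x \<bullet> v x \<partial>M)"

lemma IP_sym: "IP M u v = IP M v u"
  unfolding IP_def by (simp add: inner_commute)

lemma IP_lin:
  fixes u v w :: "'m \<Rightarrow> 'b::{real_inner, second_countable_topology}"
  assumes "L2f M u" "L2f M v" "L2f M w"
  shows "IP M (\<lambda>x. a *\<^sub>R u x + b *\<^sub>R v x) w = a * IP M u w + b * IP M v w"
proof -
  have "IP M (\<lambda>x. a *\<^sub>R u x + b *\<^sub>R v x) w = (\<integral>x. a * (u x \<bullet> w x) + b * (v x \<bullet> w x) \<partial>M)"
    unfolding IP_def by (simp add: inner_add_left)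
  also have "\<dots> = a * IP M u w + b * IP M v w"
    unfolding IP_def
    using L2f_inner_integrable[OF assms(1,3)] L2f_inner_integrable[OF assms(2,3)] by simp
  finally show ?thesis .
qed

lemma IP_lin_right:
  fixes u v w :: "'m \<Rightarrow> 'b::{real_inner, second_countable_topology}"
  assumes "L2f M u" "L2f M v" "L2f M w"
  shows "IP M w (\<lambda>x. a *\<^sub>R u x + b *\<^sub>R v x) = a * IP M w u + b * IP M w v"
proof -
  have "IP M w (\<lambda>x. a *\<^sub>R u x + b *\<^sub>R v x) = IP M (\<lambda>x. a *\<^sub>R u x + b *\<^sub>R v x) w" by (rule IP_sym)
  also have "\<dots> = a * IP M u w + b * IP M v w" by (rule IP_lin[OF assms])
  finally show ?thesis by (simp only: IP_sym[of M u w] IP_sym[of M v w])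
qed

lemma IP_nonneg: "0 \<le> IP M u u"
  unfolding IP_def by simp

lemma IP_CS:
  fixes u v :: "'m \<Rightarrow> 'b::{real_inner, second_countable_topology}"
  assumes "L2f M u" "L2f M v"
  shows "\<bar>IP M u v\<bar> \<le> sqrt (IP M u u) * sqrt (IP M v v)"
proof (rule CS_from_disc)
  fix t :: real
  have "0 \<le> IP M (\<lambda>x. 1 *\<^sub>R u x + t *\<^sub>R v x) (\<lambda>x. 1 *\<^sub>R u x + t *\<^sub>R v x)" by (rule IP_nonneg)
  also have "\<dots> = IP M u u + 2 * IP M u v * t + IP M v v * t^2"
  proof -
    have L: "L2f M (\<lambda>x. 1 *\<^sub>R u x + t *\<^sub>R v x)" using L2f_lin[OF assms] .
    have "IP M (\<lambda>x. 1 *\<^sub>R u x + t *\<^sub>R v x) (\<lambda>x. 1 *\<^sub>R u x + t *\<^sub>R v x)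
       = IP M u (\<lambda>x. 1 *\<^sub>R u x + t *\<^sub>R v x) + t * IP M v (\<lambda>x. 1 *\<^sub>R u x + t *\<^sub>R v x)"
      using IP_lin[OF assms L, of 1 t] by simp
    also have "IP M u (\<lambda>x. 1 *\<^sub>R u x + t *\<^sub>R v x) = IP M u u + t * IP M u v"
      using IP_lin_right[OF assms assms(1), of 1 t] by simp
    also have "IP M v (\<lambda>x. 1 *\<^sub>R u x + t *\<^sub>R v x) = IP M u v + t * IP M v v"
      using IP_lin_right[OF assms assms(2), of 1 t] by (simp add: IP_sym[of M v u])
    finally show ?thesis by (simp add: power2_eq_square algebra_simps)
  qed
  finally show "0 \<le> IP M u u + 2 * IP M u v * t + IP M v v * t^2" .
qed



definition hat :: "(real^2) set \<Rightarrow> (real^2 \<Rightarrow> 'b::real_vector) \<Rightarrow> real^2 \<Rightarrow> 'b" where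
  "hat \<omega> u = (\<lambda>x. indicator \<omega> x *\<^sub>R u x)"

lemma L2field_iff: "L2field \<omega> u \<longleftrightarrow> L2f lebesgue (hat \<omega> u)"
proof -
  have "(\<lambda>x. indicator \<omega> x *\<^sub>R (norm (u x))\<^sup>2) = (\<lambda>x. (norm (hat \<omega> u x))\<^sup>2)"
    by (rule ext) (simp add: hat_def indicator_def)
  thus ?thesis unfolding L2field_def L2f_def set_borel_measurable_def set_integrable_def hat_def
    by simp
qed

lemma L2ip3_eq: "L2ip3 \<omega> u v = IP lebesgue (hat \<omega> u) (hat \<omega> v)"
proof -
  have "(\<lambda>x. indicator \<omega> x *\<^sub>R (u x \<bullet> v x)) = (\<lambda>x. hat \<omega> u x \<bullet> hat \<omega> v x)"
    by (rule ext) (simp add: hat_def indicator_def)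
  thus ?thesis unfolding L2ip3_def IP_def set_lebesgue_integral_def by simp
qed

lemma L2ip_eq: "L2ip \<omega> g h = IP lebesgue (hat \<omega> g) (hat \<omega> h)"
proof -
  have "(\<lambda>x. indicator \<omega> x *\<^sub>R (g x * h x)) = (\<lambda>x. hat \<omega> g x \<bullet> hat \<omega> h x)"
    by (rule ext) (simp add: hat_def indicator_def)
  thus ?thesis unfolding L2ip_def IP_def set_lebesgue_integral_def by simp
qed

lemma hat_comp3: "hat \<omega> (comp3 u) = (\<lambda>x. hat \<omega> u x $ 3)"
  by (rule ext) (simp add: hat_def comp3_def)

lemma L2f_comp:
  fixes U :: "'m \<Rightarrow> real^3"
  assumes "L2f M U"
  shows "L2f M (\<lambda>x. U x $ i)"
proof -
  have m: "(\<lambda>x. U x $ i) \<in> borel_measurable M"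
    using measurable_compose[OF _ borel_measurable_nth] assms unfolding L2f_def by blast
  have "integrable M (\<lambda>x. (norm (U x $ i))\<^sup>2)"
  proof (rule Bochner_Integration.integrable_bound)
    show "integrable M (\<lambda>x. (norm (U x))\<^sup>2)" using assms unfolding L2f_def by auto
    show "(\<lambda>x. (norm (U x $ i))\<^sup>2) \<in> borel_measurable M" using m by measurable
    show "AE x in M. norm ((norm (U x $ i))\<^sup>2) \<le> norm ((norm (U x))\<^sup>2)"
    proof (intro AE_I2)
      fix x
      have "\<bar>U x $ i\<bar> \<le> norm (U x)" by (rule component_le_norm_cart)
      hence "\<bar>U x $ i\<bar>^2 \<le> (norm (U x))^2" by (intro power_mono) auto
      thus "norm ((norm (U x $ i))\<^sup>2) \<le> norm ((norm (U x))\<^sup>2)" by simp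
    qed
  qed
  thus ?thesis using m unfolding L2f_def by auto
qed

lemma IP_comp_le:
  fixes U :: "'m \<Rightarrow> real^3"
  assumes "L2f M U"
  shows "IP M (\<lambda>x. U x $ i) (\<lambda>x. U x $ i) \<le> IP M U U"
  unfolding IP_def
proof (rule integral_mono)
  show "integrable M (\<lambda>x. U x $ i \<bullet> U x $ i)"
    using L2f_inner_integrable[OF L2f_comp[OF assms] L2f_comp[OF assms]] .
  show "integrable M (\<lambda>x. U x \<bullet> U x)" using L2f_inner_integrable[OF assms assms] .
  fix x
  have "\<bar>U x $ i\<bar> \<le> norm (U x)" by (rule component_le_norm_cart)
  hence "\<bar>U x $ i\<bar>^2 \<le> (norm (U x))^2" by (intro power_mono) auto
  moreover have "U x \<bullet> U x = (norm (U x))^2" by (simp add: power2_norm_eq_inner)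
  moreover have "U x $ i \<bullet> U x $ i = \<bar>U x $ i\<bar>^2" by (simp add: power2_eq_square)
  ultimately show "U x $ i \<bullet> U x $ i \<le> U x \<bullet> U x" by simp
qed

lemma p_ccv_alt: "p_ccv = (\<lambda>s. -2 * min s 1)"
  by (rule ext) (simp add: p_ccv_def min_def)

lemma p_ccv_bound: "\<bar>p_ccv s\<bar> \<le> 2 * \<bar>s\<bar>"
  by (auto simp: p_ccv_def abs_mult)

lemma p_ccv_meas: "p_ccv \<in> borel_measurable borel"
proof -
  have "continuous_on UNIV (\<lambda>s::real. -2 * min s 1)" by (intro continuous_intros)
  thus ?thesis unfolding p_ccv_alt by (rule borel_measurable_continuous_onI)
qed

lemma hat_p_ccv: "hat \<omega> (\<lambda>x. p_ccv (g x)) = (\<lambda>x. p_ccv (hat \<omega> g x))"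
  by (rule ext) (simp add: hat_def indicator_def p_ccv_def)

lemma L2f_p_ccv:
  fixes G :: "'m \<Rightarrow> real"
  assumes "L2f M G"
  shows "L2f M (\<lambda>x. p_ccv (G x))"
proof -
  have m: "(\<lambda>x. p_ccv (G x)) \<in> borel_measurable M"
    using measurable_compose[OF _ p_ccv_meas] assms unfolding L2f_def by blast
  have "integrable M (\<lambda>x. (norm (p_ccv (G x)))\<^sup>2)"
  proof (rule Bochner_Integration.integrable_bound)
    show "integrable M (\<lambda>x. 4 * (norm (G x))\<^sup>2)" using assms unfolding L2f_def by auto
    show "(\<lambda>x. (norm (p_ccv (G x)))\<^sup>2) \<in> borel_measurable M" using m by measurable
    show "AE x in M. norm ((norm (p_ccv (G x)))\<^sup>2) \<le> norm (4 * (norm (G x))\<^sup>2)"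
    proof (intro AE_I2)
      fix x
      have "\<bar>p_ccv (G x)\<bar>^2 \<le> (2 * \<bar>G x\<bar>)^2" using p_ccv_bound by (intro power_mono) auto
      thus "norm ((norm (p_ccv (G x)))\<^sup>2) \<le> norm (4 * (norm (G x))\<^sup>2)"
        by (simp add: power_mult_distrib)
    qed
  qed
  thus ?thesis using m unfolding L2f_def by auto
qed

definition pos2 :: "real \<Rightarrow> real" where "pos2 s = (max (s - 1) 0)\<^sup>2"

lemma pos2_meas: "pos2 \<in> borel_measurable borel"
proof -
  have "continuous_on UNIV (\<lambda>s::real. (max (s - 1) 0)\<^sup>2)" by (intro continuous_intros)
  thus ?thesis unfolding pos2_def[abs_def] by (rule borel_measurable_continuous_onI)
qed

lemma penalty_eq: "penalty \<omega> \<epsilon> g = 1 / (2 * \<epsilon>) * (\<integral>x. pos2 (hat \<omega> g x) \<partial>lebesgue)"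
proof -
  have "(\<lambda>x. indicator \<omega> x *\<^sub>R (max (g x - 1) 0)\<^sup>2) = (\<lambda>x. pos2 (hat \<omega> g x))"
    by (rule ext) (simp add: hat_def indicator_def pos2_def)
  thus ?thesis unfolding penalty_def set_lebesgue_integral_def by simp
qed

lemma pos2_integrable:
  fixes G :: "'m \<Rightarrow> real"
  assumes "L2f M G"
  shows "integrable M (\<lambda>x. pos2 (G x))"
proof (rule Bochner_Integration.integrable_bound)
  show "integrable M (\<lambda>x. (norm (G x))\<^sup>2)" using assms unfolding L2f_def by auto
  show "(\<lambda>x. pos2 (G x)) \<in> borel_measurable M"
    using measurable_compose[OF _ pos2_meas] assms unfolding L2f_def by blast
  show "AE x in M. norm (pos2 (G x)) \<le> norm ((norm (G x))\<^sup>2)"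
  proof (intro AE_I2)
    fix x
    have "\<bar>max (G x - 1) 0\<bar> \<le> \<bar>G x\<bar>" by auto
    hence "\<bar>max (G x - 1) 0\<bar>^2 \<le> \<bar>G x\<bar>^2" by (intro power_mono) auto
    thus "norm (pos2 (G x)) \<le> norm ((norm (G x))\<^sup>2)" by (simp add: pos2_def)
  qed
qed

lemma pos2_ineq:
  fixes a e :: real
  shows "pos2 (a + e) - pos2 a \<le> 2 * (a + e) * e + p_ccv a * e"
proof (cases "a > 1")
  case True
  show ?thesis
  proof (cases "a + e > 1")
    case True
    thus ?thesis using \<open>a > 1\<close> by (simp add: pos2_def p_ccv_def power2_eq_square algebra_simps)
  next
    case False
    hence "e < 0" using \<open>a > 1\<close> by simp
    have "0 \<le> (a + e - 1) * e" using False \<open>e < 0\<close>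
      by (intro mult_nonpos_nonpos) auto
    hence h: "0 \<le> 2*a*e + 2*e*e - 2*e" by (simp add: algebra_simps)
    have "pos2 (a+e) = 0" "pos2 a = (a-1)^2" "p_ccv a = -2" using False \<open>a > 1\<close>
      by (auto simp: pos2_def p_ccv_def)
    moreover have "2*(a+e)*e + p_ccv a * e = 2*a*e + 2*e*e - 2*e"
      using \<open>a > 1\<close> by (simp add: p_ccv_def algebra_simps)
    moreover have "0 \<le> (a-1)^2" by simp
    ultimately show ?thesis using h by linarith
  qed
next
  case False
  show ?thesis
  proof (cases "a + e > 1")
    case True
    hence "a + e - 1 \<le> e" using False by simp
    moreover have "0 \<le> a + e - 1" using True by simp
    ultimately have "(a + e - 1)^2 \<le> e^2" by (intro power_mono) auto
    moreover have "pos2 (a+e) = (a + e - 1)^2" "pos2 a = 0" using True False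
      by (auto simp: pos2_def)
    moreover have "2*(a+e)*e + p_ccv a * e = 2 * e^2"
      using False by (simp add: p_ccv_def algebra_simps power2_eq_square)
    moreover have "0 \<le> e^2" by simp
    ultimately show ?thesis by linarith
  next
    case False
    thus ?thesis using \<open>\<not> a > 1\<close> by (simp add: pos2_def p_ccv_def power2_eq_square algebra_simps)
  qed
qed



definition lc :: "real \<Rightarrow> vfield \<Rightarrow> real \<Rightarrow> vfield \<Rightarrow> vfield" where
  "lc a u b v = vadd (vscale a u) (vscale b v)"

lemma lc_apply: "lc a u b v x = a *\<^sub>R u x + b *\<^sub>R v x"
  by (simp add: lc_def vadd_def vscale_def)

lemma vdiff_lc: "vdiff u v = lc 1 u (-1) v"
  by (rule ext) (simp add: lc_apply vdiff_def)

lemma vscale_lc: "vscale c u = lc c u 0 u"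
  by (rule ext) (simp add: lc_apply vscale_def)

lemma vadd_lc: "vadd u v = lc 1 u 1 v"
  by (rule ext) (simp add: lc_apply vadd_def)

lemma lc_10: "lc 1 u 0 v = u"
  by (rule ext) (simp add: lc_apply)

definition linsp :: "vfield set \<Rightarrow> bool" where
  "linsp W \<longleftrightarrow> (\<lambda>x. 0) \<in> W \<and> (\<forall>u\<in>W. \<forall>v\<in>W. vadd u v \<in> W) \<and> (\<forall>c. \<forall>u\<in>W. vscale c u \<in> W)"

lemma linsp_lc: "linsp W \<Longrightarrow> u \<in> W \<Longrightarrow> v \<in> W \<Longrightarrow> lc a u b v \<in> W"
  unfolding linsp_def lc_def by blast

lemma linsp_zero: "linsp W \<Longrightarrow> (\<lambda>x. 0) \<in> W"
  unfolding linsp_def by blast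

definition sbf :: "vfield set \<Rightarrow> (vfield \<Rightarrow> vfield \<Rightarrow> real) \<Rightarrow> bool" where
  "sbf W B \<longleftrightarrow> (\<forall>u\<in>W. \<forall>v\<in>W. B u v = B v u) \<and>
     (\<forall>u\<in>W. \<forall>v\<in>W. \<forall>w\<in>W. \<forall>a b. B (lc a u b v) w = a * B u w + b * B v w) \<and>
     (\<forall>u\<in>W. 0 \<le> B u u)"

lemma sbf_sym: "sbf W B \<Longrightarrow> u \<in> W \<Longrightarrow> v \<in> W \<Longrightarrow> B u v = B v u"
  unfolding sbf_def by blast

lemma sbf_lin: "sbf W B \<Longrightarrow> u \<in> W \<Longrightarrow> v \<in> W \<Longrightarrow> w \<in> W \<Longrightarrow> B (lc a u b v) w = a * B u w + b * B v w"
  unfolding sbf_def by blast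

lemma sbf_nonneg: "sbf W B \<Longrightarrow> u \<in> W \<Longrightarrow> 0 \<le> B u u"
  unfolding sbf_def by blast

lemma sbf_lin_right:
  assumes "sbf W B" "linsp W" "u \<in> W" "v \<in> W" "w \<in> W"
  shows "B w (lc a u b v) = a * B w u + b * B w v"
proof -
  have "B w (lc a u b v) = B (lc a u b v) w" using sbf_sym[OF assms(1) assms(5) linsp_lc[OF assms(2,3,4)]] .
  also have "\<dots> = a * B u w + b * B v w" using assms sbf_lin by blast
  also have "B u w = B w u" using assms sbf_sym by blast
  also have "B v w = B w v" using assms sbf_sym by blast
  finally show ?thesis .
qed

lemma sbf_expand:
  assumes "sbf W B" "linsp W" "u \<in> W" "v \<in> W" "x \<in> W" "y \<in> W"
  shows "B (lc a u b v) (lc c x d y) = a*c*B u x + a*d*B u y + b*c*B v x + b*d*B v y"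
proof -
  have "B (lc a u b v) (lc c x d y) = a * B u (lc c x d y) + b * B v (lc c x d y)"
    using assms linsp_lc sbf_lin by blast
  also have "\<dots> = a * (c * B u x + d * B u y) + b * (c * B v x + d * B v y)"
    using sbf_lin_right[OF assms(1,2,5,6,3)] sbf_lin_right[OF assms(1,2,5,6,4)] by simp
  finally show ?thesis by (simp add: algebra_simps)
qed

lemma sbf_CS:
  assumes "sbf W B" "linsp W" "u \<in> W" "v \<in> W"
  shows "\<bar>B u v\<bar> \<le> sqrt (B u u) * sqrt (B v v)"
proof (rule CS_from_disc)
  fix t :: real
  have "0 \<le> B (lc 1 u t v) (lc 1 u t v)" using assms linsp_lc sbf_nonneg by blast
  also have "\<dots> = B u u + 2 * B u v * t + B v v * t^2"
    using sbf_expand[OF assms(1,2,3,4,3,4), of 1 t 1 t] sbf_sym[OF assms(1,4,3)]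
    by (simp add: power2_eq_square algebra_simps)
  finally show "0 \<le> B u u + 2 * B u v * t + B v v * t^2" .
qed

lemma hilbert_linsp: "hilbert_on W ip \<Longrightarrow> linsp W"
  unfolding hilbert_on_def linsp_def by blast

lemma hilbert_sbf:
  assumes "hilbert_on W ip"
  shows "sbf W ip"
proof -
  have L: "linsp W" using hilbert_linsp[OF assms] .
  have lin: "\<forall>u\<in>W. \<forall>v\<in>W. \<forall>w\<in>W. \<forall>a b. ip (lc a u b v) w = a * ip u w + b * ip v w"
    using assms unfolding hilbert_on_def lc_def by blast
  have z: "ip (\<lambda>x. 0) w = 0" if "w \<in> W" for w
  proof -
    have "(\<lambda>x. 0) = lc 0 (\<lambda>x. 0) 0 (\<lambda>x. 0)" by (rule ext) (simp add: lc_apply)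
    moreover have "ip (lc 0 (\<lambda>x. 0) 0 (\<lambda>x. 0)) w = 0 * ip (\<lambda>x. 0) w + 0 * ip (\<lambda>x. 0) w"
      using lin linsp_zero[OF L] that by blast
    ultimately have "ip (\<lambda>x. 0) w = 0 * ip (\<lambda>x. 0) w + 0 * ip (\<lambda>x. 0) w" by simp
    thus ?thesis by simp
  qed
  have "0 \<le> ip u u" if "u \<in> W" for u
  proof (cases "u = (\<lambda>x. 0)")
    case True thus ?thesis using z that by simp
  next
    case False thus ?thesis using assms that unfolding hilbert_on_def by force
  qed
  thus ?thesis using lin assms unfolding sbf_def hilbert_on_def by blast
qed

lemma hilbert_pos:
  assumes "hilbert_on W ip" "u \<in> W" "ip u u \<le> 0"
  shows "u = (\<lambda>x. 0)"
  using assms unfolding hilbert_on_def by force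



lemma closed_sub_linsp: "closed_subspace_of G W ip \<Longrightarrow> linsp G"
  unfolding closed_subspace_of_def linsp_def by blast

lemma closed_sub_sub: "closed_subspace_of G W ip \<Longrightarrow> G \<subseteq> W"
  unfolding closed_subspace_of_def by blast

lemma sqrt_lt_from_sq: "(x::real) < e^2 \<Longrightarrow> 0 < e \<Longrightarrow> sqrt x < e"
  by (metis abs_of_pos real_sqrt_abs real_sqrt_less_mono)

lemma lax_milgram:
  fixes A :: "vfield \<Rightarrow> vfield \<Rightarrow> real" and Lf :: "vfield \<Rightarrow> real"
  assumes H: "hilbert_on W ip" and G: "closed_subspace_of G W ip"
    and A: "sbf W A" and alpha: "\<alpha> > 0" and coer: "\<And>u. u \<in> W \<Longrightarrow> \<alpha> * ip u u \<le> A u u"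
    and K: "K \<ge> 0" and bnd: "\<And>u. u \<in> W \<Longrightarrow> A u u \<le> K * ip u u"
    and Llin: "\<And>u v a b. u \<in> W \<Longrightarrow> v \<in> W \<Longrightarrow> Lf (lc a u b v) = a * Lf u + b * Lf v"
    and Lb: "\<And>w. w \<in> W \<Longrightarrow> \<bar>Lf w\<bar> \<le> M * sqrt (ip w w)"
  shows "\<exists>d\<in>G. \<forall>w\<in>G. A d w = Lf w"
proof -
  have LW: "linsp W" using hilbert_linsp[OF H] .
  have LG: "linsp G" using closed_sub_linsp[OF G] .
  have GW: "G \<subseteq> W" using closed_sub_sub[OF G] .
  have ipS: "sbf W ip" using hilbert_sbf[OF H] .
  define J where "J u = A u u / 2 - Lf u" for u
  have Jexp: "J (lc a u b v) = (a*a*A u u + a*b*A u v + b*a*A u v + b*b*A v v)/2 - (a*Lf u + b*Lf v)"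
    if "u \<in> W" "v \<in> W" for a b u v
  proof -
    have e1: "A (lc a u b v) (lc a u b v) = a*a*A u u + a*b*A u v + b*a*A u v + b*b*A v v"
      using sbf_expand[OF A LW that that, of a b a b] sbf_sym[OF A that(2,1)] by simp
    show ?thesis unfolding J_def e1 Llin[OF that] ..
  qed
  have low: "(- (M^2 / (2*\<alpha>))) \<le> J u" if "u \<in> W" for u
  proof -
    define s where "s = sqrt (ip u u)"
    have s2: "s^2 = ip u u" unfolding s_def using sbf_nonneg[OF ipS that] by simp
    have "\<alpha> * s^2 \<le> A u u" using coer[OF that] s2 by simp
    moreover have "Lf u \<le> M * s" using Lb[OF that] unfolding s_def by linarith
    ultimately have "\<alpha> * s^2 / 2 - M * s \<le> J u" unfolding J_def by linarith
    moreover have "(- (M^2 / (2*\<alpha>))) \<le> \<alpha> * s^2 / 2 - M * s"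
    proof -
      have "0 \<le> (\<alpha> * s - M)^2 / (2*\<alpha>)" using alpha by simp
      also have "(\<alpha> * s - M)^2 / (2*\<alpha>) = (\<alpha> * s^2 / 2 - M * s) + M^2 / (2*\<alpha>)"
        using alpha by (simp add: diff_divide_distrib add_divide_distrib power2_eq_square algebra_simps)
      finally show ?thesis by linarith
    qed
    ultimately show ?thesis by linarith
  qed
  define m where "m = Inf (J ` G)"
  have bdd: "bdd_below (J ` G)"
  proof (rule bdd_belowI2)
    fix x assume "x \<in> G"
    hence "x \<in> W" using GW by blast
    thus "(- (M^2 / (2*\<alpha>))) \<le> J x" by (rule low)
  qed
  have JGne: "J ` G \<noteq> {}" using linsp_zero[OF LG] by blast
  have mle: "m \<le> J x" if "x \<in> G" for x
  proof -
    have "J x \<in> J ` G" using that by (rule imageI)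
    thus ?thesis unfolding m_def using bdd by (rule cInf_lower)
  qed
  have ex: "\<exists>u. u \<in> G \<and> J u < m + inverse (real (Suc n))" for n
  proof -
    have "m < m + inverse (real (Suc n))" by simp
    hence "Inf (J ` G) < m + inverse (real (Suc n))" unfolding m_def .
    from cInf_lessD[OF JGne this] obtain y where "y \<in> J ` G" "y < m + inverse (real (Suc n))" by blast
    thus ?thesis by blast
  qed
  define s where "s n = (SOME u. u \<in> G \<and> J u < m + inverse (real (Suc n)))" for n
  have sGJ: "s n \<in> G \<and> J (s n) < m + inverse (real (Suc n))" for n
    unfolding s_def by (rule someI_ex[OF ex])
  have sG: "s n \<in> G" for n using sGJ by blast
  have sJ: "J (s n) < m + inverse (real (Suc n))" for n using sGJ by blast
  have sW: "s n \<in> W" for n using sG GW by auto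
  \<comment> \<open>parallelogram estimate\<close>
  have par: "\<alpha> * ip (vdiff (s i) (s j)) (vdiff (s i) (s j)) \<le> 4 * inverse (real (Suc i)) + 4 * inverse (real (Suc j))"
    for i j
  proof -
    let ?u = "s i" and ?v = "s j"
    have uW: "?u \<in> W" and vW: "?v \<in> W" using sW by auto
    have midG: "lc (1/2) ?u (1/2) ?v \<in> G" using linsp_lc[OF LG sG sG] .
    have "A (lc 1 ?u (-1) ?v) (lc 1 ?u (-1) ?v) = A ?u ?u - 2 * A ?u ?v + A ?v ?v"
      using sbf_expand[OF A LW uW vW uW vW, of 1 "-1" 1 "-1"] sbf_sym[OF A vW uW] by simp
    also have "\<dots> = 4 * J ?u + 4 * J ?v - 8 * J (lc (1/2) ?u (1/2) ?v)"
      using Jexp[OF uW vW, of "1/2" "1/2"] unfolding J_def by (simp add: power2_eq_square algebra_simps)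
    also have "\<dots> \<le> 4 * inverse (real (Suc i)) + 4 * inverse (real (Suc j))"
      using sJ[of i] sJ[of j] mle[OF midG] by linarith
    finally have "A (lc 1 ?u (-1) ?v) (lc 1 ?u (-1) ?v) \<le> 4 * inverse (real (Suc i)) + 4 * inverse (real (Suc j))" .
    moreover have "\<alpha> * ip (lc 1 ?u (-1) ?v) (lc 1 ?u (-1) ?v) \<le> A (lc 1 ?u (-1) ?v) (lc 1 ?u (-1) ?v)"
      using coer linsp_lc[OF LW uW vW] by blast
    ultimately show ?thesis unfolding vdiff_lc by linarith
  qed
  have cauchy: "\<forall>e>0. \<exists>N. \<forall>i\<ge>N. \<forall>j\<ge>N. sqrt (ip (vdiff (s i) (s j)) (vdiff (s i) (s j))) < e"
  proof (intro allI impI)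
    fix e :: real assume e: "e > 0"
    obtain N :: nat where N: "8 / (\<alpha> * e^2) < real N" using reals_Archimedean2 by blast
    have Npos: "0 < real (Suc N)" by simp
    have "8 / (\<alpha> * e^2) < real (Suc N)" using N by simp
    hence N': "8 * inverse (real (Suc N)) < \<alpha> * e^2" using alpha e Npos
      by (simp add: field_simps)
    show "\<exists>N. \<forall>i\<ge>N. \<forall>j\<ge>N. sqrt (ip (vdiff (s i) (s j)) (vdiff (s i) (s j))) < e"
    proof (intro exI allI impI)
      fix i j assume ij: "N \<le> i" "N \<le> j"
      have "inverse (real (Suc i)) \<le> inverse (real (Suc N))" using ij by (simp add: field_simps)
      moreover have "inverse (real (Suc j)) \<le> inverse (real (Suc N))" using ij by (simp add: field_simps)
      ultimately have "\<alpha> * ip (vdiff (s i) (s j)) (vdiff (s i) (s j)) < \<alpha> * e^2"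
        using par[of i j] N' by linarith
      hence "ip (vdiff (s i) (s j)) (vdiff (s i) (s j)) < e^2" using alpha by simp
      thus "sqrt (ip (vdiff (s i) (s j)) (vdiff (s i) (s j))) < e" using e by (rule sqrt_lt_from_sq)
    qed
  qed
  have compl: "\<forall>s. (\<forall>n. s n \<in> W) \<longrightarrow>
         (\<forall>e>0. \<exists>N. \<forall>m\<ge>N. \<forall>n\<ge>N. sqrt (ip (vdiff (s m) (s n)) (vdiff (s m) (s n))) < e) \<longrightarrow>
         (\<exists>w\<in>W. (\<lambda>n. sqrt (ip (vdiff (s n) w) (vdiff (s n) w))) \<longlonglongrightarrow> 0)"
    using H unfolding hilbert_on_def by blast
  have sW': "\<forall>n. s n \<in> W" using sW by blast
  obtain d where dW: "d \<in> W" and conv: "(\<lambda>n. sqrt (ip (vdiff (s n) d) (vdiff (s n) d))) \<longlonglongrightarrow> 0"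
    using mp[OF mp[OF spec[OF compl, of s] sW'] cauchy] by blast
  have dG: "d \<in> G" using G sG dW conv unfolding closed_subspace_of_def by blast
  define r where "r n = sqrt (ip (vdiff (s n) d) (vdiff (s n) d))" for n
  define c1 where "c1 = sqrt (A d d) * sqrt K"
  have Jd_le: "J d \<le> m + inverse (real (Suc n)) + c1 * r n + K / 2 * (r n)^2 + M * r n" for n
  proof -
    define e where "e = vdiff (s n) d"
    have eW: "e \<in> W" unfolding e_def vdiff_lc using linsp_lc[OF LW sW dW] .
    have re: "r n = sqrt (ip e e)" unfolding r_def e_def ..
    have r2: "(r n)^2 = ip e e" unfolding re by (rule real_sqrt_pow2[OF sbf_nonneg[OF ipS eW]])
    have rn: "0 \<le> r n" unfolding re using sbf_nonneg[OF ipS eW] by simp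
    have sn: "s n = lc 1 d 1 e" by (rule ext) (simp add: lc_apply e_def vdiff_def)
    have "J (s n) = J d + A d e + A e e / 2 - Lf e"
      using Jexp[OF dW eW, of 1 1] lc_10 unfolding sn J_def by (simp add: power2_eq_square)
    moreover have "A e e / 2 \<le> K / 2 * (r n)^2" using bnd[OF eW] r2 by simp
    moreover have "\<bar>A d e\<bar> \<le> c1 * r n"
    proof -
      have h1: "\<bar>A d e\<bar> \<le> sqrt (A d d) * sqrt (A e e)" using sbf_CS[OF A LW dW eW] .
      have "sqrt (A e e) \<le> sqrt (K * (r n)^2)" using bnd[OF eW] r2 by simp
      also have "sqrt (K * (r n)^2) = sqrt K * r n" using rn by (simp add: real_sqrt_mult)
      finally have h2: "sqrt (A e e) \<le> sqrt K * r n" .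
      have "sqrt (A d d) * sqrt (A e e) \<le> sqrt (A d d) * (sqrt K * r n)"
        by (rule mult_left_mono[OF h2]) (simp add: sbf_nonneg[OF A dW])
      thus ?thesis using h1 unfolding c1_def by (simp add: mult.assoc)
    qed
    moreover have "\<bar>Lf e\<bar> \<le> M * r n" using Lb[OF eW] unfolding r_def e_def .
    moreover have "0 \<le> A e e" using sbf_nonneg[OF A eW] .
    ultimately show ?thesis using sJ[of n] unfolding abs_le_iff by linarith
  qed
  have r0: "r \<longlonglongrightarrow> 0" using conv unfolding r_def .
  have lim: "(\<lambda>n. m + inverse (real (Suc n)) + c1 * r n + K / 2 * (r n)^2 + M * r n) \<longlonglongrightarrow>
        m + 0 + c1 * 0 + K / 2 * 0^2 + M * 0"
    by (intro tendsto_intros LIMSEQ_inverse_real_of_nat r0)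
  have Jd_m: "J d \<le> m"
    using LIMSEQ_le_const[OF lim, of "J d"] Jd_le by simp
  have Jmin: "J d \<le> J x" if "x \<in> G" for x using Jd_m mle[OF that] by linarith
  have "A d w = Lf w" if wG: "w \<in> G" for w
  proof -
    have wW: "w \<in> W" using wG GW by auto
    have dd: "0 \<le> 0 + 2 * ((A d w - Lf w) / 2) * t + (A w w / 2) * t^2" for t
    proof -
      have "lc 1 d t w \<in> G" using linsp_lc[OF LG dG wG] .
      hence h: "J d \<le> J (lc 1 d t w)" by (rule Jmin)
      have e1: "J (lc 1 d t w) = (1*1*A d d + 1*t*A d w + t*1*A d w + t*t*A w w)/2 - (1*Lf d + t*Lf w)"
        by (rule Jexp[OF dW wW])
      have e2: "J d = A d d / 2 - Lf d" by (simp add: J_def)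
      have e3: "2 * ((A d w - Lf w) / 2) * t + (A w w / 2) * t^2 = t * A d w - t * Lf w + t*t*A w w / 2"
        by (simp add: power2_eq_square field_simps)
      have e1': "J (lc 1 d t w) = (A d d + 2*(t*A d w) + t*t*A w w)/2 - (Lf d + t*Lf w)"
        using e1 by simp
      have "0 \<le> t * A d w - t * Lf w + t*t*A w w / 2" using h unfolding e1' e2 by (simp add: field_simps)
      thus ?thesis by (simp only: add_0_left e3)
    qed
    have "((A d w - Lf w) / 2)^2 \<le> 0 * (A w w / 2)" by (rule quad_nonneg_disc[OF dd])
    thus ?thesis by simp
  qed
  thus ?thesis using dG by blast
qed



definition c3 :: "(real^2) set \<Rightarrow> vfield \<Rightarrow> real^2 \<Rightarrow> real" where
  "c3 \<omega> u = (\<lambda>x. hat \<omega> u x $ 3)"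

lemma hat_lc: "hat \<omega> (lc a u b v) = (\<lambda>x. a *\<^sub>R hat \<omega> u x + b *\<^sub>R hat \<omega> v x)"
  by (rule ext) (simp add: hat_def lc_apply indicator_def)

lemma c3_lc: "c3 \<omega> (lc a u b v) = (\<lambda>x. a *\<^sub>R c3 \<omega> u x + b *\<^sub>R c3 \<omega> v x)"
  by (rule ext) (simp add: c3_def hat_lc)

lemma c3_L2: "L2field \<omega> u \<Longrightarrow> L2f lebesgue (c3 \<omega> u)"
  unfolding c3_def L2field_iff by (rule L2f_comp)

lemma Q_eq: "L2ip \<omega> (comp3 u) (comp3 v) = IP lebesgue (c3 \<omega> u) (c3 \<omega> v)"
  unfolding L2ip_eq hat_comp3 c3_def ..

lemma P_eq: "L2ip \<omega> (\<lambda>x. p_ccv (comp3 z x)) (comp3 w) = IP lebesgue (\<lambda>x. p_ccv (c3 \<omega> z x)) (c3 \<omega> w)"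
  unfolding L2ip_eq hat_p_ccv hat_comp3 c3_def ..

lemma Q_sbf:
  assumes "\<forall>u\<in>W. L2field \<omega> u"
  shows "sbf W (\<lambda>u v. L2ip \<omega> (comp3 u) (comp3 v))"
  unfolding sbf_def Q_eq
proof (intro conjI ballI allI)
  fix u v assume "u \<in> W" "v \<in> W"
  show "IP lebesgue (c3 \<omega> u) (c3 \<omega> v) = IP lebesgue (c3 \<omega> v) (c3 \<omega> u)" by (rule IP_sym)
next
  fix u v w a b assume "u \<in> W" "v \<in> W" "w \<in> W"
  thus "IP lebesgue (c3 \<omega> (lc a u b v)) (c3 \<omega> w) = a * IP lebesgue (c3 \<omega> u) (c3 \<omega> w) + b * IP lebesgue (c3 \<omega> v) (c3 \<omega> w)"
    unfolding c3_lc using IP_lin c3_L2 assms by blast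
next
  fix u assume "u \<in> W"
  show "0 \<le> IP lebesgue (c3 \<omega> u) (c3 \<omega> u)" by (rule IP_nonneg)
qed

lemma Q_le: "L2field \<omega> u \<Longrightarrow> L2ip \<omega> (comp3 u) (comp3 u) \<le> L2ip3 \<omega> u u"
  unfolding Q_eq L2ip3_eq c3_def L2field_iff by (rule IP_comp_le)

lemma L2ip3_lin_right:
  assumes "L2field \<omega> f" "L2field \<omega> u" "L2field \<omega> v"
  shows "L2ip3 \<omega> f (lc a u b v) = a * L2ip3 \<omega> f u + b * L2ip3 \<omega> f v"
  unfolding L2ip3_eq hat_lc using IP_lin_right assms unfolding L2field_iff by blast

lemma L2ip3_CS:
  assumes "L2field \<omega> f" "L2field \<omega> u"
  shows "\<bar>L2ip3 \<omega> f u\<bar> \<le> sqrt (L2ip3 \<omega> f f) * sqrt (L2ip3 \<omega> u u)"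
  unfolding L2ip3_eq using IP_CS assms unfolding L2field_iff by blast

lemma P_lin:
  assumes "L2field \<omega> z" "L2field \<omega> u" "L2field \<omega> v"
  shows "L2ip \<omega> (\<lambda>x. p_ccv (comp3 z x)) (comp3 (lc a u b v)) =
    a * L2ip \<omega> (\<lambda>x. p_ccv (comp3 z x)) (comp3 u) + b * L2ip \<omega> (\<lambda>x. p_ccv (comp3 z x)) (comp3 v)"
  unfolding P_eq c3_lc using IP_lin_right L2f_p_ccv c3_L2 assms by blast

lemma P_CS:
  assumes "L2field \<omega> z" "L2field \<omega> u"
  shows "\<bar>L2ip \<omega> (\<lambda>x. p_ccv (comp3 z x)) (comp3 u)\<bar> \<le>
    sqrt (IP lebesgue (\<lambda>x. p_ccv (c3 \<omega> z x)) (\<lambda>x. p_ccv (c3 \<omega> z x))) * sqrt (L2ip \<omega> (comp3 u) (comp3 u))"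
  unfolding P_eq Q_eq using IP_CS L2f_p_ccv c3_L2 assms by blast

lemma sbf_comb:
  assumes "sbf W B1" "sbf W B2" "0 \<le> a" "0 \<le> b"
  shows "sbf W (\<lambda>u v. a * B1 u v + b * B2 u v)"
  using assms unfolding sbf_def by (simp add: algebra_simps)

lemma bound_transfer:
  fixes c B C ipw :: real
  assumes "\<bar>l\<bar> \<le> c * sqrt B" "B \<le> C * ipw" "0 \<le> c" "0 \<le> C" "0 \<le> ipw"
  shows "\<bar>l\<bar> \<le> c * sqrt C * sqrt ipw"
proof -
  have "sqrt B \<le> sqrt (C * ipw)" using assms(2) by simp
  hence "c * sqrt B \<le> c * sqrt (C * ipw)" using assms(3) by (rule mult_left_mono)
  thus ?thesis using assms(1) by (simp add: real_sqrt_mult mult.assoc)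
qed



lemma step_ex1:
  fixes \<omega> :: "(real^2) set" and W G :: "vfield set" and ip :: "vfield \<Rightarrow> vfield \<Rightarrow> real"
    and f z :: vfield and \<epsilon> \<tau> C :: real
  assumes H: "hilbert_on W ip" and emb: "\<forall>u\<in>W. L2field \<omega> u"
    and Cpos: "0 < C" and Cb: "\<forall>w\<in>W. L2ip3 \<omega> w w \<le> C * ip w w"
    and fL: "L2field \<omega> f" and eps: "\<epsilon> > 0" and tau: "\<tau> > 0"
    and G: "closed_subspace_of G W ip" and zW: "z \<in> W"
  shows "\<exists>!d. d \<in> G \<and> (\<forall>w\<in>G. ip d w + energyI' \<omega> ip f (lc 1 z \<tau> d) w
            + 1 / \<epsilon> * L2ip \<omega> (comp3 (lc 1 z \<tau> d)) (comp3 w)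
          = - 1 / (2 * \<epsilon>) * L2ip \<omega> (\<lambda>x. p_ccv (comp3 z x)) (comp3 w))"
proof -
  have LW: "linsp W" using hilbert_linsp[OF H] .
  have ipS: "sbf W ip" using hilbert_sbf[OF H] .
  have GW: "G \<subseteq> W" using closed_sub_sub[OF G] .
  have LG: "linsp G" using closed_sub_linsp[OF G] .
  define Q where "Q u v = L2ip \<omega> (comp3 u) (comp3 v)" for u v
  have QS: "sbf W Q" unfolding Q_def[abs_def] using Q_sbf[OF emb] .
  have QC: "Q u u \<le> C * ip u u" if "u \<in> W" for u
    using Q_le[of \<omega> u] emb that Cb unfolding Q_def by fastforce
  define A where "A u v = (1 + \<tau>) * ip u v + (\<tau> / \<epsilon>) * Q u v" for u v
  have AS: "sbf W A" unfolding A_def[abs_def] using sbf_comb[OF ipS QS, of "1 + \<tau>" "\<tau> / \<epsilon>"] tau eps by simp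
  define P where "P w = L2ip \<omega> (\<lambda>x. p_ccv (comp3 z x)) (comp3 w)" for w
  define Lf where "Lf w = L2ip3 \<omega> f w - ip z w - (1/\<epsilon>) * Q z w - (1/(2*\<epsilon>)) * P w" for w
  have key: "(ip d w + energyI' \<omega> ip f (lc 1 z \<tau> d) w
            + 1 / \<epsilon> * L2ip \<omega> (comp3 (lc 1 z \<tau> d)) (comp3 w)
          = - 1 / (2 * \<epsilon>) * L2ip \<omega> (\<lambda>x. p_ccv (comp3 z x)) (comp3 w)) \<longleftrightarrow> A d w = Lf w"
    if dW: "d \<in> W" and wW: "w \<in> W" for d w
  proof -
    have e1: "ip (lc 1 z \<tau> d) w = ip z w + \<tau> * ip d w" using sbf_lin[OF ipS zW dW wW] by simp
    have e2: "L2ip \<omega> (comp3 (lc 1 z \<tau> d)) (comp3 w) = Q z w + \<tau> * Q d w"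
      using sbf_lin[OF QS zW dW wW] unfolding Q_def by simp
    have e3: "1 / \<epsilon> * (Q z w + \<tau> * Q d w) = (1/\<epsilon>) * Q z w + (\<tau>/\<epsilon>) * Q d w"
      by (simp add: algebra_simps)
    have e4: "- 1 / (2 * \<epsilon>) * L2ip \<omega> (\<lambda>x. p_ccv (comp3 z x)) (comp3 w) = - ((1/(2*\<epsilon>)) * P w)"
      unfolding P_def by simp
    have e5: "A d w = ip d w + \<tau> * ip d w + (\<tau> / \<epsilon>) * Q d w"
      unfolding A_def by (simp add: algebra_simps)
    show ?thesis unfolding energyI'_def e1 e2 e3 e4 e5 Lf_def by linarith
  qed
  have ex: "\<exists>d\<in>G. \<forall>w\<in>G. A d w = Lf w"
  proof (rule lax_milgram[OF H G AS])
    show "0 < 1 + \<tau>" using tau by simp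
    show "(1 + \<tau>) * ip u u \<le> A u u" if "u \<in> W" for u
      using sbf_nonneg[OF QS that] tau eps unfolding A_def by simp
    show "0 \<le> (1 + \<tau>) + \<tau> / \<epsilon> * C" using tau eps Cpos by simp
    show "A u u \<le> ((1 + \<tau>) + \<tau> / \<epsilon> * C) * ip u u" if "u \<in> W" for u
    proof -
      have "(\<tau> / \<epsilon>) * Q u u \<le> (\<tau> / \<epsilon>) * (C * ip u u)"
        using QC[OF that] tau eps by (intro mult_left_mono) auto
      thus ?thesis unfolding A_def by (simp add: algebra_simps)
    qed
    show "Lf (lc a u b v) = a * Lf u + b * Lf v" if "u \<in> W" "v \<in> W" for u v a b
    proof -
      have "L2ip3 \<omega> f (lc a u b v) = a * L2ip3 \<omega> f u + b * L2ip3 \<omega> f v"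
        using L2ip3_lin_right fL emb that by blast
      moreover have "ip z (lc a u b v) = a * ip z u + b * ip z v"
        using sbf_lin_right[OF ipS LW that zW] .
      moreover have "Q z (lc a u b v) = a * Q z u + b * Q z v"
        using sbf_lin_right[OF QS LW that zW] .
      moreover have "P (lc a u b v) = a * P u + b * P v"
        unfolding P_def using P_lin emb zW that by blast
      ultimately show ?thesis unfolding Lf_def by (simp add: algebra_simps)
    qed
    define X1 where "X1 = sqrt (L2ip3 \<omega> f f) * sqrt C"
    define X2 where "X2 = sqrt (ip z z)"
    define X3 where "X3 = (1/\<epsilon>) * (sqrt (Q z z) * sqrt C)"
    define X4 where "X4 = (1/(2*\<epsilon>)) * (sqrt (IP lebesgue (\<lambda>x. p_ccv (c3 \<omega> z x)) (\<lambda>x. p_ccv (c3 \<omega> z x))) * sqrt C)"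
    show "\<bar>Lf w\<bar> \<le> (X1 + X2 + X3 + X4) * sqrt (ip w w)" if wW: "w \<in> W" for w
    proof -
      have wL: "L2field \<omega> w" using emb wW by blast
      have ipw: "0 \<le> ip w w" using sbf_nonneg[OF ipS wW] .
      have b1: "\<bar>L2ip3 \<omega> f w\<bar> \<le> X1 * sqrt (ip w w)"
        unfolding X1_def
        by (rule bound_transfer[OF L2ip3_CS[OF fL wL]]) (use Cb wW Cpos ipw IP_nonneg in \<open>auto simp: L2ip3_eq\<close>)
      have b2: "\<bar>ip z w\<bar> \<le> X2 * sqrt (ip w w)" unfolding X2_def using sbf_CS[OF ipS LW zW wW] .
      have b3': "\<bar>Q z w\<bar> \<le> sqrt (Q z z) * sqrt C * sqrt (ip w w)"
        by (rule bound_transfer[OF sbf_CS[OF QS LW zW wW]]) (use QC wW Cpos ipw sbf_nonneg[OF QS zW] in auto)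
      have b3: "\<bar>(1/\<epsilon>) * Q z w\<bar> \<le> X3 * sqrt (ip w w)"
        unfolding X3_def using mult_left_mono[OF b3', of "1/\<epsilon>"] eps by (simp add: abs_mult mult.assoc)
      have b4': "\<bar>P w\<bar> \<le> sqrt (IP lebesgue (\<lambda>x. p_ccv (c3 \<omega> z x)) (\<lambda>x. p_ccv (c3 \<omega> z x))) * sqrt C * sqrt (ip w w)"
        unfolding P_def
        by (rule bound_transfer[OF P_CS]) (use emb zW wL QC wW Cpos ipw IP_nonneg in \<open>auto simp: Q_def\<close>)
      have b4: "\<bar>(1/(2*\<epsilon>)) * P w\<bar> \<le> X4 * sqrt (ip w w)"
        unfolding X4_def using mult_left_mono[OF b4', of "1/(2*\<epsilon>)"] eps by (simp add: abs_mult mult.assoc)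
      have "(X1 + X2 + X3 + X4) * sqrt (ip w w) = X1 * sqrt (ip w w) + X2 * sqrt (ip w w) + X3 * sqrt (ip w w) + X4 * sqrt (ip w w)"
        by (simp add: algebra_simps)
      thus ?thesis using b1 b2 b3 b4 unfolding Lf_def abs_le_iff by linarith
    qed
  qed
  have uniq: "d1 = d2" if d1: "d1 \<in> G" "\<forall>w\<in>G. A d1 w = Lf w" and d2: "d2 \<in> G" "\<forall>w\<in>G. A d2 w = Lf w" for d1 d2
  proof -
    define e where "e = lc 1 d1 (-1) d2"
    have eG: "e \<in> G" unfolding e_def using linsp_lc[OF LG d1(1) d2(1)] .
    have d1W: "d1 \<in> W" and d2W: "d2 \<in> W" and eW: "e \<in> W" using d1 d2 eG GW by auto
    have "A e e = A d1 e - A d2 e" unfolding e_def using sbf_lin[OF AS d1W d2W eW[unfolded e_def]] by simp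
    also have "\<dots> = 0" using d1(2) d2(2) eG by simp
    finally have "A e e = 0" .
    moreover have "(1 + \<tau>) * ip e e \<le> A e e"
      using sbf_nonneg[OF QS eW] tau eps unfolding A_def by simp
    ultimately have "ip e e \<le> 0" using tau by (simp add: mult_le_0_iff)
    hence "e = (\<lambda>x. 0)" by (rule hilbert_pos[OF H eW])
    thus "d1 = d2" unfolding e_def by (metis (no_types) lc_apply ext eq_iff_diff_eq_0 scaleR_one scaleR_minus1_left diff_conv_add_uminus)
  qed
  show ?thesis
  proof (rule ex_ex1I)
    from ex obtain d where "d \<in> G" "\<forall>w\<in>G. A d w = Lf w" by blast
    thus "\<exists>d. d \<in> G \<and> (\<forall>w\<in>G. ip d w + energyI' \<omega> ip f (lc 1 z \<tau> d) w
            + 1 / \<epsilon> * L2ip \<omega> (comp3 (lc 1 z \<tau> d)) (comp3 w)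
          = - 1 / (2 * \<epsilon>) * L2ip \<omega> (\<lambda>x. p_ccv (comp3 z x)) (comp3 w))"
      using key GW by blast
  next
    fix d1 d2
    assume "d1 \<in> G \<and> (\<forall>w\<in>G. ip d1 w + energyI' \<omega> ip f (lc 1 z \<tau> d1) w
            + 1 / \<epsilon> * L2ip \<omega> (comp3 (lc 1 z \<tau> d1)) (comp3 w)
          = - 1 / (2 * \<epsilon>) * L2ip \<omega> (\<lambda>x. p_ccv (comp3 z x)) (comp3 w))"
      and "d2 \<in> G \<and> (\<forall>w\<in>G. ip d2 w + energyI' \<omega> ip f (lc 1 z \<tau> d2) w
            + 1 / \<epsilon> * L2ip \<omega> (comp3 (lc 1 z \<tau> d2)) (comp3 w)
          = - 1 / (2 * \<epsilon>) * L2ip \<omega> (\<lambda>x. p_ccv (comp3 z x)) (comp3 w))"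
    thus "d1 = d2" using key GW uniq by (meson subsetD)
  qed
qed



lemma energy_step:
  fixes \<omega> :: "(real^2) set" and W :: "vfield set" and ip :: "vfield \<Rightarrow> vfield \<Rightarrow> real"
    and f z d :: vfield and \<epsilon> \<tau> :: real
  assumes H: "hilbert_on W ip" and emb: "\<forall>u\<in>W. L2field \<omega> u"
    and fL: "L2field \<omega> f" and eps: "\<epsilon> > 0" and tau: "\<tau> > 0"
    and zW: "z \<in> W" and dW: "d \<in> W"
    and eq: "ip d d + energyI' \<omega> ip f (lc 1 z \<tau> d) d + 1 / \<epsilon> * L2ip \<omega> (comp3 (lc 1 z \<tau> d)) (comp3 d)
          = - 1 / (2 * \<epsilon>) * L2ip \<omega> (\<lambda>x. p_ccv (comp3 z x)) (comp3 d)"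
  shows "energyI \<omega> ip f (lc 1 z \<tau> d) + penalty \<omega> \<epsilon> (comp3 (lc 1 z \<tau> d)) + \<tau> * (normstar ip d)\<^sup>2
     \<le> energyI \<omega> ip f z + penalty \<omega> \<epsilon> (comp3 z)"
proof -
  have LW: "linsp W" using hilbert_linsp[OF H] .
  have ipS: "sbf W ip" using hilbert_sbf[OF H] .
  define u where "u = lc 1 z \<tau> d"
  have uW: "u \<in> W" unfolding u_def using linsp_lc[OF LW zW dW] .
  have zL: "L2field \<omega> z" and dL: "L2field \<omega> d" and uL: "L2field \<omega> u" using emb zW dW uW by auto
  define zz where "zz = ip z z"
  define zd where "zd = ip z d"
  define dd where "dd = ip d d"
  define fz where "fz = L2ip3 \<omega> f z"
  define fd where "fd = L2ip3 \<omega> f d"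
  define Qud where "Qud = IP lebesgue (c3 \<omega> u) (c3 \<omega> d)"
  define Pd where "Pd = IP lebesgue (\<lambda>x. p_ccv (c3 \<omega> z x)) (c3 \<omega> d)"
  have uu: "ip u u = zz + 2 * (\<tau> * zd) + \<tau> * \<tau> * dd"
    using sbf_expand[OF ipS LW zW dW zW dW, of 1 \<tau> 1 \<tau>] sbf_sym[OF ipS dW zW]
    unfolding u_def zz_def zd_def dd_def by simp
  have ud: "ip u d = zd + \<tau> * dd"
    using sbf_lin[OF ipS zW dW dW, of 1 \<tau>] unfolding u_def zd_def dd_def by simp
  have fu: "L2ip3 \<omega> f u = fz + \<tau> * fd"
    using L2ip3_lin_right[OF fL zL dL, of 1 \<tau>] unfolding u_def fz_def fd_def by simp
  have uu0: "0 \<le> ip u u" using sbf_nonneg[OF ipS uW] .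
  have dd0: "0 \<le> dd" unfolding dd_def using sbf_nonneg[OF ipS dW] .
  have nu: "(normstar ip u)\<^sup>2 = ip u u" unfolding normstar_def using uu0 by simp
  have nd: "(normstar ip d)\<^sup>2 = dd" unfolding normstar_def dd_def using sbf_nonneg[OF ipS dW] by simp
  have EU: "energyI \<omega> ip f u = 1/2 * zz + \<tau> * zd + 1/2 * (\<tau> * \<tau> * dd) - fz - \<tau> * fd"
    unfolding energyI_def nu uu fu by (simp add: algebra_simps)
  have EZ: "energyI \<omega> ip f z = 1/2 * zz - fz"
    unfolding energyI_def normstar_def zz_def fz_def using sbf_nonneg[OF ipS zW] by simp
  have eq': "dd + zd + \<tau> * dd - fd + (1/\<epsilon>) * Qud = - ((1/(2*\<epsilon>)) * Pd)"
    using eq unfolding u_def[symmetric] energyI'_def ud Q_eq P_eq Qud_def[symmetric] Pd_def[symmetric]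
      dd_def[symmetric] fd_def[symmetric] by simp
  have cu: "c3 \<omega> u x = c3 \<omega> z x + \<tau> * c3 \<omega> d x" for x unfolding u_def c3_lc by simp
  have czL: "L2f lebesgue (c3 \<omega> z)" and cdL: "L2f lebesgue (c3 \<omega> d)" and cuL: "L2f lebesgue (c3 \<omega> u)"
    using c3_L2 zL dL uL by auto
  have pzL: "L2f lebesgue (\<lambda>x. p_ccv (c3 \<omega> z x))" using L2f_p_ccv[OF czL] .
  have i1: "integrable lebesgue (\<lambda>x. pos2 (c3 \<omega> u x))" using pos2_integrable[OF cuL] .
  have i2: "integrable lebesgue (\<lambda>x. pos2 (c3 \<omega> z x))" using pos2_integrable[OF czL] .
  have i3: "integrable lebesgue (\<lambda>x. c3 \<omega> u x * c3 \<omega> d x)" using L2f_inner_integrable[OF cuL cdL] by simp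
  have i4: "integrable lebesgue (\<lambda>x. p_ccv (c3 \<omega> z x) * c3 \<omega> d x)" using L2f_inner_integrable[OF pzL cdL] by simp
  have "(\<integral>x. pos2 (c3 \<omega> u x) \<partial>lebesgue) - (\<integral>x. pos2 (c3 \<omega> z x) \<partial>lebesgue)
      = (\<integral>x. pos2 (c3 \<omega> u x) - pos2 (c3 \<omega> z x) \<partial>lebesgue)"
    using i1 i2 by simp
  also have "\<dots> \<le> (\<integral>x. 2 * \<tau> * (c3 \<omega> u x * c3 \<omega> d x) + \<tau> * (p_ccv (c3 \<omega> z x) * c3 \<omega> d x) \<partial>lebesgue)"
  proof (rule integral_mono)
    show "integrable lebesgue (\<lambda>x. pos2 (c3 \<omega> u x) - pos2 (c3 \<omega> z x))" using i1 i2 by simp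
    show "integrable lebesgue (\<lambda>x. 2 * \<tau> * (c3 \<omega> u x * c3 \<omega> d x) + \<tau> * (p_ccv (c3 \<omega> z x) * c3 \<omega> d x))"
      using i3 i4 by simp
    fix x
    have "pos2 (c3 \<omega> z x + \<tau> * c3 \<omega> d x) - pos2 (c3 \<omega> z x)
       \<le> 2 * (c3 \<omega> z x + \<tau> * c3 \<omega> d x) * (\<tau> * c3 \<omega> d x) + p_ccv (c3 \<omega> z x) * (\<tau> * c3 \<omega> d x)"
      by (rule pos2_ineq)
    thus "pos2 (c3 \<omega> u x) - pos2 (c3 \<omega> z x)
       \<le> 2 * \<tau> * (c3 \<omega> u x * c3 \<omega> d x) + \<tau> * (p_ccv (c3 \<omega> z x) * c3 \<omega> d x)"
      unfolding cu by (simp add: algebra_simps)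
  qed
  also have "\<dots> = 2 * \<tau> * Qud + \<tau> * Pd"
    using i3 i4 unfolding Qud_def Pd_def IP_def by simp
  finally have pint: "(\<integral>x. pos2 (c3 \<omega> u x) \<partial>lebesgue) - (\<integral>x. pos2 (c3 \<omega> z x) \<partial>lebesgue) \<le> 2 * \<tau> * Qud + \<tau> * Pd" .
  have pen: "penalty \<omega> \<epsilon> (comp3 w) = 1 / (2 * \<epsilon>) * (\<integral>x. pos2 (c3 \<omega> w x) \<partial>lebesgue)" for w
    unfolding penalty_eq hat_comp3 c3_def ..
  have "penalty \<omega> \<epsilon> (comp3 u) - penalty \<omega> \<epsilon> (comp3 z)
      = 1 / (2 * \<epsilon>) * ((\<integral>x. pos2 (c3 \<omega> u x) \<partial>lebesgue) - (\<integral>x. pos2 (c3 \<omega> z x) \<partial>lebesgue))"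
    unfolding pen by (simp add: algebra_simps)
  also have "\<dots> \<le> 1 / (2 * \<epsilon>) * (2 * \<tau> * Qud + \<tau> * Pd)"
    using pint eps by (intro mult_left_mono) auto
  also have "\<dots> = \<tau> * ((1/\<epsilon>) * Qud + (1/(2*\<epsilon>)) * Pd)"
    using eps by (simp add: field_simps)
  also have "(1/\<epsilon>) * Qud + (1/(2*\<epsilon>)) * Pd = fd - dd - zd - \<tau> * dd" using eq' by linarith
  finally have penI: "penalty \<omega> \<epsilon> (comp3 u) - penalty \<omega> \<epsilon> (comp3 z) \<le> \<tau> * fd - \<tau> * dd - \<tau> * zd - \<tau> * \<tau> * dd"
    by (simp add: algebra_simps)
  have "0 \<le> \<tau> * \<tau> * dd" using tau dd0 by simp
  show ?thesis unfolding u_def[symmetric] EU EZ nd using penI \<open>0 \<le> \<tau> * \<tau> * dd\<close> by linarith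
qed



theorem proposition6p1:
  fixes \<omega> :: "(real^2) set" and W :: "vfield set" and ip :: "vfield \<Rightarrow> vfield \<Rightarrow> real"
    and F :: "nat \<Rightarrow> vfield set" and f y0 :: vfield and \<epsilon> \<tau> :: real
  assumes "open \<omega>" and "connected \<omega>" and "\<omega> \<noteq> {}" and "bounded \<omega>"
    and "hilbert_on W ip" and "cont_embedded_L2 \<omega> W ip"
    and "\<And>k. closed_subspace_of (F k) W ip"
    and "L2field \<omega> f"
    and "\<epsilon> > 0" and "\<tau> > 0" and "y0 \<in> W"
  shows "(\<exists>!y. ccv_flow \<omega> ip F f \<epsilon> \<tau> y0 y) \<and>
         (\<forall>y. ccv_flow \<omega> ip F f \<epsilon> \<tau> y0 y \<longrightarrow>
            (\<forall>k\<ge>1. energyI \<omega> ip f (y k) + penalty \<omega> \<epsilon> (comp3 (y k))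
                     + \<tau> * (normstar ip (dt \<tau> y k))\<^sup>2
                   \<le> energyI \<omega> ip f (y (k - 1)) + penalty \<omega> \<epsilon> (comp3 (y (k - 1)))))"
proof -
  note H = assms(5) and G = assms(7) and fL = assms(8) and eps = assms(9) and tau = assms(10)
    and y0W = assms(11)
  have LW: "linsp W" using hilbert_linsp[OF H] .
  have ipS: "sbf W ip" using hilbert_sbf[OF H] .
  have emb: "\<forall>u\<in>W. L2field \<omega> u" using assms(6) unfolding cont_embedded_L2_def by blast
  obtain C0 where C0: "\<forall>w\<in>W. L2ip3 \<omega> w w \<le> C0 * ip w w"
    using assms(6) unfolding cont_embedded_L2_def by blast
  define C where "C = \<bar>C0\<bar> + 1"
  have Cpos: "0 < C" unfolding C_def by simp
  have Cb: "\<forall>w\<in>W. L2ip3 \<omega> w w \<le> C * ip w w"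
  proof
    fix w assume wW: "w \<in> W"
    have "C0 * ip w w \<le> C * ip w w" unfolding C_def
      using sbf_nonneg[OF ipS wW] by (intro mult_right_mono) auto
    thus "L2ip3 \<omega> w w \<le> C * ip w w" using C0 wW by fastforce
  qed
  have FW: "F k \<subseteq> W" for k using closed_sub_sub[OF G] .
  define E where "E k z d \<longleftrightarrow> d \<in> F k \<and> (\<forall>w\<in>F k. ip d w + energyI' \<omega> ip f (lc 1 z \<tau> d) w
            + 1 / \<epsilon> * L2ip \<omega> (comp3 (lc 1 z \<tau> d)) (comp3 w)
          = - 1 / (2 * \<epsilon>) * L2ip \<omega> (\<lambda>x. p_ccv (comp3 z x)) (comp3 w))" for k z d
  have step: "\<exists>!d. E k z d" if "z \<in> W" for k z
    unfolding E_def by (rule step_ex1[OF H emb Cpos Cb fL eps tau G that])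
  have yk: "y (Suc j) = lc 1 (y j) \<tau> (dt \<tau> y (Suc j))" for y :: "nat \<Rightarrow> vfield" and j
    by (rule ext) (use tau in \<open>simp add: lc_apply dt_def vscale_def vdiff_def\<close>)
  have cond: "(D \<in> F j \<and> (\<forall>w\<in>F j. ip D w + energyI' \<omega> ip f Y w + 1 / \<epsilon> * L2ip \<omega> (comp3 Y) (comp3 w)
           = - 1 / (2 * \<epsilon>) * L2ip \<omega> (\<lambda>x. p_ccv (comp3 z x)) (comp3 w))) \<longleftrightarrow> E j z D"
    if "Y = lc 1 z \<tau> D" for Y z D j
    unfolding E_def that ..
  have flow_iff: "ccv_flow \<omega> ip F f \<epsilon> \<tau> y0 y \<longleftrightarrow> y 0 = y0 \<and> (\<forall>j. E j (y j) (dt \<tau> y (Suc j)))" for y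
  proof -
    have "(\<forall>k\<ge>1. dt \<tau> y k \<in> F (k - 1) \<and>
        (\<forall>w\<in>F (k - 1).
           ip (dt \<tau> y k) w + energyI' \<omega> ip f (y k) w + 1 / \<epsilon> * L2ip \<omega> (comp3 (y k)) (comp3 w)
           = - 1 / (2 * \<epsilon>) * L2ip \<omega> (\<lambda>x. p_ccv (comp3 (y (k - 1)) x)) (comp3 w)))
      \<longleftrightarrow> (\<forall>j. E j (y j) (dt \<tau> y (Suc j)))"
    proof
      assume a: "\<forall>k\<ge>1. dt \<tau> y k \<in> F (k - 1) \<and>
        (\<forall>w\<in>F (k - 1).
           ip (dt \<tau> y k) w + energyI' \<omega> ip f (y k) w + 1 / \<epsilon> * L2ip \<omega> (comp3 (y k)) (comp3 w)
           = - 1 / (2 * \<epsilon>) * L2ip \<omega> (\<lambda>x. p_ccv (comp3 (y (k - 1)) x)) (comp3 w))"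
      show "\<forall>j. E j (y j) (dt \<tau> y (Suc j))"
      proof
        fix j
        from a[rule_format, of "Suc j"] show "E j (y j) (dt \<tau> y (Suc j))"
          using cond[OF yk[of y j]] by simp
      qed
    next
      assume a: "\<forall>j. E j (y j) (dt \<tau> y (Suc j))"
      show "\<forall>k\<ge>1. dt \<tau> y k \<in> F (k - 1) \<and>
        (\<forall>w\<in>F (k - 1).
           ip (dt \<tau> y k) w + energyI' \<omega> ip f (y k) w + 1 / \<epsilon> * L2ip \<omega> (comp3 (y k)) (comp3 w)
           = - 1 / (2 * \<epsilon>) * L2ip \<omega> (\<lambda>x. p_ccv (comp3 (y (k - 1)) x)) (comp3 w))"
      proof (intro allI impI)
        fix k :: nat assume "k \<ge> 1"
        then obtain j where kj: "k = Suc j" by (cases k) auto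
        show "dt \<tau> y k \<in> F (k - 1) \<and>
          (\<forall>w\<in>F (k - 1).
           ip (dt \<tau> y k) w + energyI' \<omega> ip f (y k) w + 1 / \<epsilon> * L2ip \<omega> (comp3 (y k)) (comp3 w)
           = - 1 / (2 * \<epsilon>) * L2ip \<omega> (\<lambda>x. p_ccv (comp3 (y (k - 1)) x)) (comp3 w))"
          unfolding kj using a cond[OF yk[of y j]] by simp
      qed
    qed
    thus ?thesis unfolding ccv_flow_def by simp
  qed
  have inW: "y k \<in> W" if "ccv_flow \<omega> ip F f \<epsilon> \<tau> y0 y" for y k
  proof (induction k)
    case 0 thus ?case using that y0W unfolding flow_iff by simp
  next
    case (Suc j)
    have "dt \<tau> y (Suc j) \<in> W" using that FW unfolding flow_iff E_def by blast
    hence "lc 1 (y j) \<tau> (dt \<tau> y (Suc j)) \<in> W" using linsp_lc[OF LW Suc.IH] by blast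
    thus ?case using yk[of y j] by simp
  qed
  define Y where "Y = rec_nat y0 (\<lambda>k z. lc 1 z \<tau> (THE d. E k z d))"
  have Y0: "Y 0 = y0" unfolding Y_def by simp
  have YS: "Y (Suc k) = lc 1 (Y k) \<tau> (THE d. E k (Y k) d)" for k unfolding Y_def by simp
  have YW: "Y k \<in> W \<and> E k (Y k) (THE d. E k (Y k) d)" for k
  proof (induction k)
    case 0 thus ?case using y0W Y0 theI'[OF step[OF y0W]] by simp
  next
    case (Suc k)
    have "(THE d. E k (Y k) d) \<in> W" using Suc.IH FW unfolding E_def by blast
    hence W1: "Y (Suc k) \<in> W" unfolding YS using linsp_lc[OF LW] Suc.IH by blast
    thus ?case using theI'[OF step[OF W1]] by simp
  qed
  have Ydt: "dt \<tau> Y (Suc k) = (THE d. E k (Y k) d)" for k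
    by (rule ext) (use tau in \<open>simp add: YS dt_def vscale_def vdiff_def lc_apply\<close>)
  have flowY: "ccv_flow \<omega> ip F f \<epsilon> \<tau> y0 Y"
    unfolding flow_iff using Y0 YW Ydt by simp
  have uniq: "y1 = y2" if f1: "ccv_flow \<omega> ip F f \<epsilon> \<tau> y0 y1" and f2: "ccv_flow \<omega> ip F f \<epsilon> \<tau> y0 y2" for y1 y2
  proof
    fix k show "y1 k = y2 k"
    proof (induction k)
      case 0 thus ?case using f1 f2 unfolding flow_iff by simp
    next
      case (Suc j)
      have e1: "E j (y1 j) (dt \<tau> y1 (Suc j))" using f1 unfolding flow_iff by blast
      have e2: "E j (y1 j) (dt \<tau> y2 (Suc j))" using f2 Suc.IH unfolding flow_iff by metis
      have "dt \<tau> y1 (Suc j) = dt \<tau> y2 (Suc j)"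
        using step[OF inW[OF f1]] e1 e2 by blast
      thus ?case using yk[of y1 j] yk[of y2 j] Suc.IH by simp
    qed
  qed
  have part1: "\<exists>!y. ccv_flow \<omega> ip F f \<epsilon> \<tau> y0 y" using flowY uniq by blast
  have part2: "energyI \<omega> ip f (y k) + penalty \<omega> \<epsilon> (comp3 (y k)) + \<tau> * (normstar ip (dt \<tau> y k))\<^sup>2
                   \<le> energyI \<omega> ip f (y (k - 1)) + penalty \<omega> \<epsilon> (comp3 (y (k - 1)))"
    if fl: "ccv_flow \<omega> ip F f \<epsilon> \<tau> y0 y" and k1: "k \<ge> 1" for y k
  proof -
    obtain j where kj: "k = Suc j" using k1 by (cases k) auto
    have Ej: "E j (y j) (dt \<tau> y (Suc j))" using fl unfolding flow_iff by blast
    have dW: "dt \<tau> y (Suc j) \<in> W" using Ej FW unfolding E_def by blast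
    have dF: "dt \<tau> y (Suc j) \<in> F j" using Ej unfolding E_def by blast
    have eq: "ip (dt \<tau> y (Suc j)) (dt \<tau> y (Suc j)) + energyI' \<omega> ip f (lc 1 (y j) \<tau> (dt \<tau> y (Suc j))) (dt \<tau> y (Suc j))
        + 1 / \<epsilon> * L2ip \<omega> (comp3 (lc 1 (y j) \<tau> (dt \<tau> y (Suc j)))) (comp3 (dt \<tau> y (Suc j)))
       = - 1 / (2 * \<epsilon>) * L2ip \<omega> (\<lambda>x. p_ccv (comp3 (y j) x)) (comp3 (dt \<tau> y (Suc j)))"
      using Ej dF unfolding E_def by blast
    have yy: "lc 1 (y j) \<tau> (dt \<tau> y (Suc j)) = y (Suc j)" using yk[of y j] by simp
    from energy_step[OF H emb fL eps tau inW[OF fl] dW eq]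
    show ?thesis unfolding yy kj by simp
  qed
  show ?thesis using part1 part2 by blast
qed

end
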